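(* Let $P \subset \mathbb{R}^2$ be a finite point set satisfying the standing condition, let $\varepsilon \in (0,1)$, let $X = \{t_1,\dots,t_m\}$ be the set of extreme points of $P$ indexed in counterclockwise order of their polar angles (indices taken cyclically, so $t_{m+1} = t_1$), and for each $i \in \{1,\dots,m\}$ let $x^*_i \in \mathbb{S}^1$ be the unit vector with $\langle t_i, x\rangle = \langle t_{i+1}, x\rangle$ and $\langle t_i, x\rangle > 0$. Define $$S = X \cup \{ p \in P \setminus X : \exists\, i \in \{1,\dots,m\} \text{ with } \langle p, x^*_i\rangle \geq (1-\varepsilon)\langle t_i, x^*_i\rangle \}.$$ Then for every $p \in P$: $p \in S$ if and only if $R_\varepsilon(p) \neq \varnothing$.
   Context: For a finite $Q \subset \mathbb{R}^2$ and unit vector $x$, $\omega(x,Q) = \max_{p \in Q}\langle p,x\rangle$. Standing condition: $\omega(x,P) > 0$ for all $x \in \mathbb{S}^1$ (the origin is interior to the convex hull of $P$). The Voronoi cell of $p \in P$ is $R(p) = \{x \in \mathbb{R}^2 \setminus \{0\} : \langle p,x\rangle \geq \omega(x,P)\}$; $p$ is an extreme point iff $R(p) \neq \varnothing$ (the extreme points are exactly the vertices of the convex hull of $P$). The $\varepsilon$-approximate Voronoi cell of $p$ is $R_\varepsilon(p) = \{x \in \mathbb{R}^2 \setminus \{0\} : \langle p,x\rangle \geq (1-\varepsilon)\,\omega(x,P)\}$. *)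

theory Defs
  imports "HOL-Analysis.Analysis"
begin

text \<open>The plane R^2 is modelled by the type complex, with its real inner product
  (x \<bullet> y = Re x * Re y + Im x * Im y); polar angle is Arg.\<close>

definition omega :: "complex \<Rightarrow> complex set \<Rightarrow> real" where
  "omega x Q = Max ((\<lambda>p. p \<bullet> x) ` Q)"

definition standing_cond :: "complex set \<Rightarrow> bool" where
  "standing_cond P \<longleftrightarrow> finite P \<and> P \<noteq> {} \<and> (\<forall>x\<in>sphere 0 1. omega x P > 0)"

definition vor_cell :: "complex set \<Rightarrow> complex \<Rightarrow> complex set" where
  "vor_cell P p = {x. x \<noteq> 0 \<and> p \<bullet> x \<ge> omega x P}"

definition approx_cell :: "real \<Rightarrow> complex set \<Rightarrow> complex \<Rightarrow> complex set" where
  "approx_cell \<epsilon> P p = {x. x \<noteq> 0 \<and> p \<bullet> x \<ge> (1 - \<epsilon>) * omega x P}"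

definition extreme_pts :: "complex set \<Rightarrow> complex set" where
  "extreme_pts P = {p. p extreme_point_of (convex hull P)}"

end

theory Submission
  imports Defs
begin
definition cr :: "complex \<Rightarrow> complex \<Rightarrow> real" where
  "cr a b = Re a * Im b - Im a * Re b"

definition rel :: "complex \<Rightarrow> complex \<Rightarrow> real" where
  "rel a b = (if Arg a \<le> Arg b then Arg b - Arg a else Arg b - Arg a + 2*pi)"

lemma Re_polar: "Re z = cmod z * cos (Arg z)" and Im_polar: "Im z = cmod z * sin (Arg z)"
  by (cases "z = 0"; simp add: cos_Arg sin_Arg)+

lemma cr_polar: "cr a b = cmod a * cmod b * sin (Arg b - Arg a)"
  unfolding cr_def sin_diff Re_polar[of a] Re_polar[of b] Im_polar[of a] Im_polar[of b]
  by (simp add: algebra_simps)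

lemma inner_polar: "a \<bullet> b = cmod a * cmod b * cos (Arg b - Arg a)"
  unfolding inner_complex_def cos_diff Re_polar[of a] Re_polar[of b] Im_polar[of a] Im_polar[of b]
  by (simp add: algebra_simps)

lemma rel_bounds: "0 \<le> rel a b" "rel a b < 2*pi"
  using Arg_bounded[of a] Arg_bounded[of b] by (auto simp: rel_def)

lemma rel_eq0: "rel a b = 0 \<longleftrightarrow> Arg a = Arg b"
  using Arg_bounded[of a] Arg_bounded[of b] by (auto simp: rel_def)

lemma sin_m2pi: "sin (x - 2*pi) = sin x"
  by (metis diff_add_cancel sin_periodic)
lemma cos_m2pi: "cos (x - 2*pi) = cos x"
  by (metis diff_add_cancel cos_periodic)

lemma sin_rel: "sin (Arg b - Arg a) = sin (rel a b)"
  by (simp add: rel_def sin_periodic[of "Arg b - Arg a", simplified add_ac])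

lemma sin_rel2: "sin (Arg v - Arg w) = sin (rel u v - rel u w)"
proof -
  have "rel u v - rel u w = Arg v - Arg w \<or> rel u v - rel u w = Arg v - Arg w + 2*pi
     \<or> rel u v - rel u w = Arg v - Arg w - 2*pi"
    by (auto simp: rel_def)
  then show ?thesis using sin_periodic[of "Arg v - Arg w"] sin_m2pi[of "Arg v - Arg w"] by auto
qed

lemma cos_rel2: "cos (Arg w - (Arg u + e)) = cos (rel u w - e)"
proof -
  have "rel u w - e = Arg w - (Arg u + e) \<or> rel u w - e = Arg w - (Arg u + e) + 2*pi"
    by (auto simp: rel_def)
  then show ?thesis using cos_periodic[of "Arg w - (Arg u + e)"] by metis
qed

lemma rel_add: "rel u v \<le> rel u w \<Longrightarrow> rel v w = rel u w - rel u v"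
  using Arg_bounded[of u] Arg_bounded[of v] Arg_bounded[of w]
  unfolding rel_def by (auto split: if_split_asm)

lemma cr_decomp: "cr u v *\<^sub>R w = cr w v *\<^sub>R u + cr u w *\<^sub>R v"
  by (simp add: complex_eq_iff cr_def algebra_simps)

lemma inner_cis: "t \<bullet> cis \<phi> = cmod t * cos (Arg t - \<phi>)"
  unfolding inner_complex_def cos_diff Re_polar[of t] Im_polar[of t]
  by (simp add: algebra_simps)

lemma cos_le0: "pi/2 \<le> x \<Longrightarrow> x \<le> 3*pi/2 \<Longrightarrow> cos x \<le> 0"
  using cos_ge_zero[of "x - pi"] by simp

lemma solve_lin:
  fixes w u v :: complex
  assumes "D *\<^sub>R w = A *\<^sub>R u + B *\<^sub>R v" "B \<noteq> 0"
  shows "v = (D/B) *\<^sub>R w + (-A/B) *\<^sub>R u"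
proof -
  have 1: "D * Re w = A * Re u + B * Re v" "D * Im w = A * Im u + B * Im v"
    using arg_cong[OF assms(1), of Re] arg_cong[OF assms(1), of Im] by simp_all
  show ?thesis using 1 assms(2) by (simp add: complex_eq_iff field_simps)
qed

lemma ext_contra:
  fixes C :: "complex set"
  assumes C: "convex C" "0 \<in> C" and ext: "a extreme_point_of C" and wC: "w \<in> C" and bC: "b \<in> C"
    and a: "a = l *\<^sub>R w + m *\<^sub>R b" and l: "0 < l" and m: "0 \<le> m" and lm: "l + m < 1"
    and aw: "a \<noteq> w"
  shows False
proof -
  define z where "z = (m/(1-l)) *\<^sub>R b"
  have "(m/(1-l)) *\<^sub>R b + (1 - m/(1-l)) *\<^sub>R 0 \<in> C"
  proof (rule convexD[OF C(1) bC C(2)])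
    have p: "1 - l > 0" using l m lm by linarith
    show "0 \<le> m/(1-l)" using p m by simp
    show "0 \<le> 1 - m/(1-l)" using p lm by (simp add: field_simps)
  qed simp
  then have zC: "z \<in> C" by (simp add: z_def)
  have a2: "a = (1 - (1-l)) *\<^sub>R w + (1-l) *\<^sub>R z"
  proof -
    have "(1-l) * (m/(1-l)) = m" using l m lm by simp
    then show ?thesis by (simp add: z_def a)
  qed
  have wz: "w \<noteq> z"
  proof
    assume "w = z"
    then have "a = w" using a2 by (simp add: algebra_simps)
    then show False using aw by simp
  qed
  have "a \<in> open_segment w z"
    unfolding in_segment(2) using wz l lm m a2 by (intro conjI exI[of _ "1-l"]) auto
  then show False using ext wC zC unfolding extreme_point_of_def by blast
qed

theorem lemma1:
  fixes P :: "complex set" and \<epsilon> :: real and ts :: "complex list" and xs :: "nat \<Rightarrow> complex"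
  assumes "standing_cond P"
    and "0 < \<epsilon>" and "\<epsilon> < 1"
    and "distinct ts" and "set ts = extreme_pts P"
    and "sorted_wrt (\<lambda>a b. Arg a < Arg b) ts"
    and "\<forall>i < length ts. xs i \<in> sphere 0 1
           \<and> ts ! i \<bullet> xs i = ts ! ((i + 1) mod length ts) \<bullet> xs i
           \<and> ts ! i \<bullet> xs i > 0"
  shows "\<forall>p \<in> P. p \<in> extreme_pts P \<union>
                 {q \<in> P - extreme_pts P. \<exists>i < length ts. q \<bullet> xs i \<ge> (1 - \<epsilon>) * (ts ! i \<bullet> xs i)}
            \<longleftrightarrow> approx_cell \<epsilon> P p \<noteq> {}"
proof -
  define m where "m = length ts"
  define t where "t = (\<lambda>k. ts ! k)"
  define nx where "nx = (\<lambda>i. (i + 1) mod m)"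
  define d where "d = (\<lambda>i. rel (t i) (t (nx i)))"
  have fin: "finite P" and ne: "P \<noteq> {}" and st: "\<forall>x\<in>sphere 0 1. omega x P > 0"
    using assms(1) unfolding standing_cond_def by auto
  have hx: "\<And>i. i < m \<Longrightarrow> xs i \<in> sphere 0 1 \<and> t i \<bullet> xs i = t (nx i) \<bullet> xs i \<and> t i \<bullet> xs i > 0"
    using assms(7) unfolding t_def nx_def m_def by blast
  have omega_ge: "\<And>q x. q \<in> P \<Longrightarrow> q \<bullet> x \<le> omega x P"
    unfolding omega_def using fin by (intro Max_ge) auto
  have omega_le: "\<And>x c. (\<forall>q\<in>P. q \<bullet> x \<le> c) \<Longrightarrow> omega x P \<le> c"
    unfolding omega_def using fin ne by (subst Max_le_iff) auto
  have pos: "\<exists>q\<in>P. q \<bullet> y > 0" if y: "y \<noteq> 0" for y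
  proof -
    define y' where "y' = (1/norm y) *\<^sub>R y"
    have "y' \<in> sphere 0 1" using y by (simp add: y'_def)
    then have "omega y' P > 0" using st by blast
    moreover have "omega y' P \<in> (\<lambda>p. p \<bullet> y') ` P"
      unfolding omega_def using fin ne by (intro Max_in) auto
    ultimately obtain q where q: "q \<in> P" "q \<bullet> y' > 0" by auto
    then have "q \<bullet> y > 0" using y by (simp add: y'_def zero_less_divide_iff)
    then show ?thesis using q by blast
  qed
  have omega_pos: "\<And>x. x \<noteq> 0 \<Longrightarrow> omega x P > 0"
    using pos omega_ge by (meson less_le_trans)
  have conv: "convex hull P = convex hull (set ts)"
  proof -
    have "convex hull P = convex hull {x. x extreme_point_of (convex hull P)}"
      by (rule Krein_Milman_Minkowski) (simp_all add: fin finite_imp_compact_convex_hull)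
    also have "{x. x extreme_point_of (convex hull P)} = set ts"
      using assms(5) unfolding extreme_pts_def by simp
    finally show ?thesis .
  qed
  have tsP: "set ts \<subseteq> P"
    using assms(5) extreme_point_of_convex_hull unfolding extreme_pts_def by blast
  have tP: "\<And>k. k < m \<Longrightarrow> t k \<in> P" using tsP nth_mem unfolding t_def m_def by blast
  have tC: "\<And>k. k < m \<Longrightarrow> t k \<in> convex hull P" using tP hull_subset[of P convex] by blast
  have textr: "\<And>k. k < m \<Longrightarrow> t k extreme_point_of (convex hull P)"
    using assms(5) unfolding extreme_pts_def t_def m_def by (metis mem_Collect_eq nth_mem)
  have hull_bound: "\<forall>q\<in>P. q \<bullet> y \<le> c" if h: "\<forall>k<m. t k \<bullet> y \<le> c" for y c
  proof -
    have "set ts \<subseteq> {z. y \<bullet> z \<le> c}"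
      using h unfolding t_def m_def by (auto simp: in_set_conv_nth inner_commute)
    then have "convex hull (set ts) \<subseteq> {z. y \<bullet> z \<le> c}"
      by (intro hull_minimal convex_halfspace_le)
    then show ?thesis using hull_subset[of P convex] conv by (auto simp: inner_commute)
  qed
  have zero_in: "0 \<in> convex hull P"
  proof (rule ccontr)
    assume "0 \<notin> convex hull P"
    moreover have "closed (convex hull P)"
      by (simp add: fin finite_imp_compact_convex_hull compact_imp_closed)
    ultimately obtain a b where ab: "a \<noteq> 0" "0 < b" "\<forall>x\<in>convex hull P. a \<bullet> x > b"
      using separating_hyperplane_closed_0[of "convex hull P"] by auto
    obtain q where q: "q \<in> P" "q \<bullet> (-a) > 0" using pos[of "-a"] ab(1) by auto
    moreover have "a \<bullet> q > b" using ab(3) hull_subset[of P convex] q(1) by blast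
    ultimately show False using ab(2) by (simp add: inner_commute)
  qed
  have m2: "m \<ge> 2"
  proof -
    have "m \<noteq> 0"
    proof
      assume "m = 0" then have "set ts = {}" by (simp add: m_def)
      then have "convex hull P = {}" using conv by simp
      then show False using ne hull_subset[of P convex] by auto
    qed
    moreover have "m \<noteq> 1"
    proof
      assume "m = 1" then have "set ts = {t 0}" unfolding m_def t_def by (cases ts) auto
      then have "P \<subseteq> {t 0}" using conv hull_subset[of P convex] by auto
      moreover obtain q1 where "q1 \<in> P" "q1 \<bullet> 1 > 0" using pos[of 1] by auto
      moreover obtain q2 where "q2 \<in> P" "q2 \<bullet> (-1) > 0" using pos[of "-1"] by auto
      ultimately show False by (smt (verit) inner_commute singletonD subsetD complex_inner_1_right inner_minus_right)
    qed
    ultimately show ?thesis by linarith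
  qed
  have mono: "Arg (t i) < Arg (t k)" if "i < k" "k < m" for i k
    using assms(6)[unfolded sorted_wrt_iff_nth_less] that unfolding t_def m_def by blast
  have tnz: "t k \<noteq> 0" if "k < m" for k using hx[OF that] by (metis inner_zero_left less_irrefl)
  have nx_lt: "\<And>i. i < m \<Longrightarrow> nx i < m" using m2 by (simp add: nx_def)
  have nx_ne: "nx i \<noteq> i" if i: "i < m" for i
  proof (cases "i + 1 < m")
    case True then show ?thesis by (simp add: nx_def)
  next
    case False then have "i + 1 = m" using i by linarith
    then show ?thesis using m2 by (simp add: nx_def)
  qed
  have Arg_inj: "Arg (t i) \<noteq> Arg (t k)" if "i < m" "k < m" "i \<noteq> k" for i k
    using mono[of i k] mono[of k i] that by (cases "i < k") auto
  have S1: "0 < d i" if i: "i < m" for i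
    using rel_bounds(1)[of "t i" "t (nx i)"] rel_eq0[of "t i" "t (nx i)"]
      Arg_inj[OF i nx_lt[OF i]] nx_ne[OF i] unfolding d_def by fastforce
  have S2: "d i \<le> rel (t i) (t k)" if ik: "i < m" "k < m" "k \<noteq> i" for i k
  proof (cases "i + 1 < m")
    case True
    then have nxi: "nx i = i + 1" by (simp add: nx_def)
    have b1: "-pi < Arg (t k)" "Arg (t (i+1)) \<le> pi" using Arg_bounded by auto
    have "i + 1 < k \<or> k = i+1 \<or> k < i" using ik by linarith
    then show ?thesis
    proof (elim disjE)
      assume "i+1 < k" then have "Arg (t (i+1)) < Arg (t k)" "Arg (t i) < Arg (t (i+1))"
        using mono ik True by auto
      then show ?thesis unfolding d_def nxi rel_def by auto
    next
      assume "k = i+1" then show ?thesis by (simp add: d_def nxi)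
    next
      assume "k < i" then have "Arg (t k) < Arg (t i)" "Arg (t i) < Arg (t (i+1))"
        using mono ik True by auto
      then show ?thesis using b1 unfolding d_def nxi rel_def by auto
    qed
  next
    case False
    then have ii: "i + 1 = m" using ik by linarith
    then have nxi: "nx i = 0" by (simp add: nx_def)
    have "Arg (t 0) < Arg (t i)" using mono[of 0 i] ii m2 ik by auto
    moreover have "Arg (t 0) \<le> Arg (t k)" using mono[of 0 k] ik by (cases "k = 0") auto
    moreover have "Arg (t k) < Arg (t i)" using mono[of k i] ik ii by auto
    ultimately show ?thesis unfolding d_def nxi rel_def by auto
  qed
  have dpi: "d i < pi" if i: "i < m" for i
  proof (rule ccontr)
    assume "\<not> d i < pi"
    then have dge: "pi \<le> d i" by simp
    have dlt: "d i < 2*pi" using rel_bounds unfolding d_def by auto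
    define y where "y = cis (Arg (t i) + d i / 2)"
    have "\<forall>k<m. t k \<bullet> y \<le> 0"
    proof (intro allI impI)
      fix k assume k: "k < m"
      have e: "t k \<bullet> y = cmod (t k) * cos (rel (t i) (t k) - d i / 2)"
        unfolding y_def inner_cis cos_rel2 ..
      have "cos (rel (t i) (t k) - d i / 2) \<le> 0"
      proof (cases "k = i")
        case True
        then have "rel (t i) (t k) = 0" by (simp add: rel_def)
        then show ?thesis using cos_le0[of "d i / 2"] dge dlt by simp
      next
        case False
        then have "d i \<le> rel (t i) (t k)" using S2 i k by auto
        then show ?thesis using rel_bounds[of "t i" "t k"] dge dlt by (intro cos_le0) auto
      qed
      then show "t k \<bullet> y \<le> 0" unfolding e by (simp add: mult_nonneg_nonpos)
    qed
    then have "\<forall>q\<in>P. q \<bullet> y \<le> 0" by (rule hull_bound)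
    moreover have "y \<noteq> 0" unfolding y_def by (metis cis_neq_zero)
    ultimately show False using pos by fastforce
  qed
  have crpos: "cr (t i) (t (nx i)) > 0" if i: "i < m" for i
  proof -
    have "sin (d i) > 0" using S1[OF i] dpi[OF i] by (rule sin_gt_zero)
    then show ?thesis using tnz[OF i] tnz[OF nx_lt[OF i]] unfolding cr_polar sin_rel d_def by simp
  qed
  have G2: "\<not> (cr (t i) (t k) > 0 \<and> cr (t k) (t (nx i)) > 0)" if i: "i < m" and k: "k < m" for i k
  proof
    assume h: "cr (t i) (t k) > 0 \<and> cr (t k) (t (nx i)) > 0"
    show False
    proof (cases "k = i")
      case True then show False using h by (simp add: cr_def)
    next
      case False
      then have sd: "d i \<le> rel (t i) (t k)" using S2 i k by auto
      have e1: "cr (t i) (t k) = cmod (t i) * cmod (t k) * sin (rel (t i) (t k))"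
        unfolding cr_polar sin_rel ..
      have e2: "cr (t k) (t (nx i)) = cmod (t k) * cmod (t (nx i)) * sin (d i - rel (t i) (t k))"
        unfolding cr_polar d_def by (simp add: sin_rel2[of _ _ "t i"])
      show False
      proof (cases "pi \<le> rel (t i) (t k)")
        case True
        then have "sin (rel (t i) (t k)) \<le> 0" using rel_bounds by (intro sin_le_zero) auto
        then have "cr (t i) (t k) \<le> 0" unfolding e1 by (simp add: mult_nonneg_nonpos)
        then show False using h by simp
      next
        case False
        then have "sin (rel (t i) (t k) - d i) \<ge> 0" using sd S1[OF i] by (intro sin_ge_zero) linarith+
        then have "sin (d i - rel (t i) (t k)) \<le> 0" by (metis minus_diff_eq neg_0_le_iff_le sin_minus)
        then have "cr (t k) (t (nx i)) \<le> 0" unfolding e2 by (simp add: mult_nonneg_nonpos)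
        then show False using h by simp
      qed
    qed
  qed
  have cvx: "convex (convex hull P)" by simp
  have factA: "omega (xs i) P \<le> t i \<bullet> xs i" if i: "i < m" for i
  proof -
    define u v x c where "u = t i" and "v = t (nx i)" and "x = xs i" and "c = t i \<bullet> xs i"
    have ux: "u \<bullet> x = c" "v \<bullet> x = c" "c > 0" using hx[OF i] by (auto simp: u_def v_def x_def c_def)
    define D where "D = cr u v"
    have D: "D > 0" using crpos[OF i] by (simp add: D_def u_def v_def)
    have "\<forall>k<m. t k \<bullet> x \<le> c"
    proof (intro allI impI; rule ccontr)
      fix k assume k: "k < m" and nk: "\<not> t k \<bullet> x \<le> c"
      define w where "w = t k"
      have wx: "w \<bullet> x > c" using nk by (simp add: w_def)
      define A B where "A = cr w v" and "B = cr u w"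
      have dec: "D *\<^sub>R w = A *\<^sub>R u + B *\<^sub>R v" unfolding D_def A_def B_def by (rule cr_decomp)
      have "D * (w \<bullet> x) = A * c + B * c"
        using arg_cong[OF dec, of "\<lambda>z. z \<bullet> x"] ux by (simp add: inner_add_left)
      moreover have "D * (w \<bullet> x) > D * c" using wx D by simp
      ultimately have "(A + B) * c > D * c" by (simp add: algebra_simps)
      then have AB: "A + B > D" using ux(3) by simp
      have nb: "\<not> (B > 0 \<and> A > 0)" using G2[OF i k] unfolding A_def B_def u_def v_def w_def by blast
      have uC: "u \<in> convex hull P" "v \<in> convex hull P" "w \<in> convex hull P"
        using tC i nx_lt k by (auto simp: u_def v_def w_def)
      show False
      proof (cases "A \<le> 0")
        case True
        then have Bp: "B > D" using AB by linarith
        have veq: "v = (D/B) *\<^sub>R w + (-A/B) *\<^sub>R u" using solve_lin[OF dec] Bp D by simp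
        show False
        proof (rule ext_contra[OF cvx zero_in _ uC(3) uC(1) veq])
          show "v extreme_point_of convex hull P" using textr[OF nx_lt[OF i]] by (simp add: v_def)
          show "0 < D/B" using D Bp by simp
          show "0 \<le> -A/B" using True Bp D by (intro divide_nonneg_pos) auto
          show "D/B + -A/B < 1" using Bp D AB by (simp add: field_simps)
          show "v \<noteq> w" using wx ux by auto
        qed
      next
        case False
        then have Bn: "B \<le> 0" and Ap: "A > D" using nb AB by auto
        have dec2: "D *\<^sub>R w = B *\<^sub>R v + A *\<^sub>R u" using dec by (simp add: add.commute)
        have ueq: "u = (D/A) *\<^sub>R w + (-B/A) *\<^sub>R v" using solve_lin[OF dec2] Ap D by simp
        show False
        proof (rule ext_contra[OF cvx zero_in _ uC(3) uC(2) ueq])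
          show "u extreme_point_of convex hull P" using textr[OF i] by (simp add: u_def)
          show "0 < D/A" using D Ap by simp
          show "0 \<le> -B/A" using Bn Ap D by (intro divide_nonneg_pos) auto
          show "D/A + -B/A < 1" using Ap D AB by (simp add: field_simps)
          show "u \<noteq> w" using wx ux by auto
        qed
      qed
    qed
    then have "\<forall>q\<in>P. q \<bullet> x \<le> c" by (rule hull_bound)
    then show ?thesis using omega_le unfolding x_def c_def by blast
  qed
  have factD: "\<exists>i<m. rel (t i) q < d i" for q
  proof -
    obtain i where i: "i < m" and imin: "\<forall>k<m. rel (t i) q \<le> rel (t k) q"
    proof -
      have "Min ((\<lambda>k. rel (t k) q) ` {..<m}) \<in> (\<lambda>k. rel (t k) q) ` {..<m}"
        using m2 by (intro Min_in) (auto simp: lessThan_empty_iff)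
      then obtain i where "i < m" "rel (t i) q = Min ((\<lambda>k. rel (t k) q) ` {..<m})" by auto
      moreover have "\<forall>k<m. Min ((\<lambda>k. rel (t k) q) ` {..<m}) \<le> rel (t k) q"
        by (intro allI impI Min_le) auto
      ultimately show ?thesis using that by auto
    qed
    show ?thesis
    proof (rule ccontr)
      assume "\<not> ?thesis"
      then have "d i \<le> rel (t i) q" using i by force
      then have "rel (t (nx i)) q = rel (t i) q - d i" unfolding d_def by (rule rel_add)
      then have "rel (t (nx i)) q < rel (t i) q" using S1[OF i] by simp
      then show False using imin nx_lt[OF i] by force
    qed
  qed
  show ?thesis
  proof (intro ballI iffI)
    fix p assume pP: "p \<in> P"
    assume pS: "p \<in> extreme_pts P \<union>
                 {q \<in> P - extreme_pts P. \<exists>i < length ts. q \<bullet> xs i \<ge> (1 - \<epsilon>) * (ts ! i \<bullet> xs i)}"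
    then obtain i where i: "i < m" and pi: "(1 - \<epsilon>) * (t i \<bullet> xs i) \<le> p \<bullet> xs i"
    proof
      assume "p \<in> extreme_pts P"
      then obtain i where "i < m" "p = t i" using assms(5) unfolding m_def t_def
        by (metis in_set_conv_nth)
      moreover have "(1 - \<epsilon>) * (t i \<bullet> xs i) \<le> t i \<bullet> xs i"
        using hx[OF \<open>i < m\<close>] assms(2) by (simp add: mult_le_cancel_right1)
      ultimately show ?thesis using that by blast
    next
      assume "p \<in> {q \<in> P - extreme_pts P. \<exists>i < length ts. q \<bullet> xs i \<ge> (1 - \<epsilon>) * (ts ! i \<bullet> xs i)}"
      then show ?thesis using that unfolding m_def t_def by blast
    qed
    have "xs i \<noteq> 0" using hx[OF i] by auto
    moreover have "(1 - \<epsilon>) * omega (xs i) P \<le> p \<bullet> xs i"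
      using mult_left_mono[OF factA[OF i], of "1 - \<epsilon>"] assms(3) pi by linarith
    ultimately show "approx_cell \<epsilon> P p \<noteq> {}" unfolding approx_cell_def by blast
  next
    fix p assume pP: "p \<in> P" and ne2: "approx_cell \<epsilon> P p \<noteq> {}"
    then obtain x where x: "x \<noteq> 0" "(1 - \<epsilon>) * omega x P \<le> p \<bullet> x"
      unfolding approx_cell_def by blast
    show "p \<in> extreme_pts P \<union>
                 {q \<in> P - extreme_pts P. \<exists>i < length ts. q \<bullet> xs i \<ge> (1 - \<epsilon>) * (ts ! i \<bullet> xs i)}"
    proof (cases "p \<in> extreme_pts P")
      case True then show ?thesis by blast
    next
      case False
      have "\<exists>i<m. (1 - \<epsilon>) * (t i \<bullet> xs i) \<le> p \<bullet> xs i"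
      proof (rule ccontr)
        assume "\<not> ?thesis"
        then have lt: "\<forall>i<m. p \<bullet> xs i < (1 - \<epsilon>) * (t i \<bullet> xs i)" by force
        obtain i where i: "i < m" and ri: "rel (t i) p < d i" using factD by blast
        define u v c where "u = t i" and "v = t (nx i)" and "c = t i \<bullet> xs i"
        have ux: "u \<bullet> xs i = c" "v \<bullet> xs i = c" "c > 0" using hx[OF i] by (auto simp: u_def v_def c_def)
        define D A B where "D = cr u v" and "A = cr p v" and "B = cr u p"
        have D: "D > 0" using crpos[OF i] by (simp add: D_def u_def v_def)
        have dec: "D *\<^sub>R p = A *\<^sub>R u + B *\<^sub>R v" unfolding D_def A_def B_def by (rule cr_decomp)
        have A: "A \<ge> 0"
        proof -
          have "A = cmod p * cmod v * sin (d i - rel (t i) p)"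
            unfolding A_def cr_polar d_def v_def by (simp add: sin_rel2[of _ _ "t i"])
          moreover have "sin (d i - rel (t i) p) \<ge> 0"
            using ri dpi[OF i] rel_bounds[of "t i" p] by (intro sin_ge_zero) auto
          ultimately show ?thesis by simp
        qed
        have B: "B \<ge> 0"
        proof -
          have "B = cmod u * cmod p * sin (rel (t i) p)"
            unfolding B_def cr_polar sin_rel u_def ..
          moreover have "sin (rel (t i) p) \<ge> 0"
            using ri dpi[OF i] rel_bounds[of "t i" p] by (intro sin_ge_zero) auto
          ultimately show ?thesis by simp
        qed
        have e1: "D * (p \<bullet> xs i) = (A + B) * c"
          using arg_cong[OF dec, of "\<lambda>z. z \<bullet> xs i"] ux by (simp add: inner_add_left algebra_simps)
        have "D * (p \<bullet> xs i) < D * ((1 - \<epsilon>) * c)" using lt i D by (simp add: c_def)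
        then have "(A + B) * c < (D * (1 - \<epsilon>)) * c" using e1 by (simp add: algebra_simps)
        then have AB: "A + B < D * (1 - \<epsilon>)" using ux(3) by simp
        have e2: "D * (p \<bullet> x) = A * (u \<bullet> x) + B * (v \<bullet> x)"
          using arg_cong[OF dec, of "\<lambda>z. z \<bullet> x"] by (simp add: inner_add_left)
        have "u \<bullet> x \<le> omega x P" "v \<bullet> x \<le> omega x P"
          using omega_ge tP i nx_lt by (auto simp: u_def v_def)
        then have "D * (p \<bullet> x) \<le> (A + B) * omega x P"
          unfolding e2 using A B by (simp add: distrib_right add_mono mult_left_mono)
        also have "\<dots> < (D * (1 - \<epsilon>)) * omega x P"
          using AB omega_pos[OF x(1)] by simp
        also have "\<dots> \<le> D * (p \<bullet> x)" using x(2) D by (simp add: mult.assoc)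
        finally show False by simp
      qed
      then show ?thesis using False pP unfolding m_def t_def by blast
    qed
  qed
qed

end
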